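(* Let $r>1$ be an integer and let $M$ be the sub-add move matrix. For every $0\le i\le 2r-1$ and every vertex $(2^{\lfloor i/2\rfloor}x,2^{\lfloor i/2\rfloor}y)\in\mathcal P_i$ (with $x,y$ integers), the vertex $(2^{\lfloor i/2\rfloor}(x-y),2^{\lfloor i/2\rfloor}(x+y))\in\mathcal P_{i+1}$ has exactly two parents in $\Gamma_{M,\,2^r}$.
   Context: The sub-add move matrix is $M=\begin{pmatrix}1&-1\\1&1\end{pmatrix}$. For $n\in\mathbb N$, $\Gamma_{M,\,n}$ is the directed graph with vertex set $\mathbb Z_n^2$ and arcs $((a,b),(a-b,a+b))$ for all $(a,b)\in\mathbb Z_n^2$ (computed mod $n$; loops allowed). If $({\bf v},{\bf w})$ is an arc, ${\bf v}$ is a parent of ${\bf w}$ (in particular $(0,0)$ is a parent of itself). For $n=2^r$: for $0\le t\le r-1$, $\mathcal P_{2t}$ is the set of pairs $(2^tx,2^ty)\in\mathbb Z_{2^r}^2$ with $x,y$ integers exactly one of which is odd, and $\mathcal P_{2t+1}$ is the set of pairs $(2^tx,2^ty)$ with $x,y$ both odd; $\mathcal P_{2r}=\{(0,0)\}$. These sets partition $\mathbb Z_{2^r}^2$. *)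

theory Defs
  imports Main
begin

text \<open>Z_n^2 represented by pairs of integers in {0..<n}; all arithmetic taken mod n.\<close>

definition vertices :: "int \<Rightarrow> (int \<times> int) set" where
  "vertices n = {(a, b). 0 \<le> a \<and> a < n \<and> 0 \<le> b \<and> b < n}"

text \<open>Sub-add move matrix M = [[1,-1],[1,1]] acting mod n.\<close>
definition submove :: "int \<Rightarrow> int \<times> int \<Rightarrow> int \<times> int" where
  "submove n v = ((fst v - snd v) mod n, (fst v + snd v) mod n)"

definition is_arc :: "int \<Rightarrow> int \<times> int \<Rightarrow> int \<times> int \<Rightarrow> bool" where
  "is_arc n v w \<longleftrightarrow> v \<in> vertices n \<and> w = submove n v"

definition parents :: "int \<Rightarrow> int \<times> int \<Rightarrow> (int \<times> int) set" where
  "parents n w = {v. is_arc n v w}"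

definition Pclass :: "nat \<Rightarrow> nat \<Rightarrow> (int \<times> int) set" where
  "Pclass r i =
     (if i = 2 * r then {(0, 0)}
      else if i < 2 * r then
        (if even i then
           {((2 ^ (i div 2) * x) mod 2 ^ r, (2 ^ (i div 2) * y) mod 2 ^ r) | x y :: int.
              odd x \<noteq> odd y}
         else
           {((2 ^ (i div 2) * x) mod 2 ^ r, (2 ^ (i div 2) * y) mod 2 ^ r) | x y :: int.
              odd x \<and> odd y})
      else {})"

end

theory Submission
  imports Defs
begin

lemma kernel2:
  fixes d h :: int
  assumes "h > 0" "(2*h) dvd (2*d)"
  shows "d mod (2*h) = 0 \<or> d mod (2*h) = h"
proof -
  from assms have "h dvd d" by simp
  then obtain k where k: "d = h*k" by blast
  have "d mod (2*h) = (h*k) mod (h*2)" by (simp only: k mult.commute[of 2 h])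
  also have "\<dots> = h * (k mod 2)" by (rule mult_mod_right[symmetric])
  finally have "d mod (2*h) = h * (k mod 2)" .
  moreover have "k mod 2 = 0 \<or> k mod 2 = 1" by auto
  ultimately show ?thesis by auto
qed

lemma parents_two:
  fixes h p q :: int
  assumes h: "h > 0" and p: "0 \<le> p" "p < 2*h" and q: "0 \<le> q" "q < 2*h"
  shows "card (parents (2*h) (submove (2*h) (p,q))) = 2"
proof -
  define n where "n = 2*h"
  have n: "n > 0" using h n_def by simp
  define v1 where "v1 = ((p+h) mod n, (q+h) mod n)"
  have ne: "v1 \<noteq> (p,q)"
  proof
    assume "v1 = (p,q)"
    then have "(p+h) mod n = p mod n" using p n_def by (simp add: v1_def)
    then have "n dvd h" using mod_eq_dvd_iff[of "p+h" n p] by simp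
    then show False using h n_def by (auto dest: zdvd_imp_le)
  qed
  have "parents n (submove n (p,q)) = {(p,q), v1}"
  proof (intro equalityI subsetI)
    fix v assume "v \<in> parents n (submove n (p,q))"
    then obtain a b where v: "v = (a,b)" and ab: "0 \<le> a" "a < n" "0 \<le> b" "b < n"
      and e1: "(a - b) mod n = (p - q) mod n" and e2: "(a+b) mod n = (p+q) mod n"
      by (auto simp: parents_def is_arc_def vertices_def submove_def)
    define d where "d = a - p"
    define e where "e = b - q"
    have "n dvd (a - b) - (p - q)" using e1 mod_eq_dvd_iff by blast
    moreover have "(a - b) - (p - q) = d - e" by (simp add: d_def e_def)
    ultimately have de1: "n dvd (d - e)" by simp
    have "n dvd (a + b) - (p + q)" using e2 mod_eq_dvd_iff by blast
    moreover have "(a + b) - (p + q) = d + e" by (simp add: d_def e_def)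
    ultimately have de2: "n dvd (d + e)" by simp
    have "(d - e) + (d + e) = 2*d" by simp
    then have "n dvd 2*d" using dvd_add[OF de1 de2] by simp
    then have dd: "d mod n = 0 \<or> d mod n = h" using kernel2[OF h] n_def by simp
    have ed: "e mod n = d mod n" using de1 mod_eq_dvd_iff[of d n e] by simp
    have a: "a = (p + d) mod n" using ab d_def by simp
    have b: "b = (q + e) mod n" using ab e_def by simp
    from dd show "v \<in> {(p,q), v1}"
    proof
      assume "d mod n = 0"
      then have "a = p mod n" "b = q mod n" using a b ed
        by (metis mod_add_right_eq add_0_right)+
      then have "a = p" "b = q" using p q n_def by simp_all
      then show ?thesis using v by simp
    next
      assume "d mod n = h"
      then have "a = (p+h) mod n" "b = (q+h) mod n" using a b ed
        by (metis mod_add_right_eq)+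
      then show ?thesis using v v1_def by simp
    qed
  next
    fix v assume "v \<in> {(p,q), v1}"
    then show "v \<in> parents n (submove n (p,q))"
    proof
      assume "v = (p,q)" then show ?thesis using p q n_def
        by (simp add: parents_def is_arc_def vertices_def)
    next
      assume "v \<in> {v1}"
      then have v: "v = v1" by simp
      have "((p+h) mod n - (q+h) mod n) mod n = (p - q) mod n"
        by (simp add: mod_diff_eq)
      moreover have "((p+h) mod n + (q+h) mod n) mod n = ((p+h) + (q+h)) mod n"
        by (rule mod_add_eq)
      moreover have "(p+h) + (q+h) = p + q + n" by (simp add: n_def)
      moreover have "(p + q + n) mod n = (p+q) mod n" by simp
      ultimately show ?thesis using v v1_def n
        by (simp add: parents_def is_arc_def vertices_def submove_def)
    qed
  qed
  then show ?thesis using ne n_def by simp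
qed

lemma parity_transfer:
  fixes x x' :: int and t r :: nat
  assumes "t < r" "(2^t*x) mod 2^r = (2^t*x') mod 2^r"
  shows "odd x = odd x'"
proof -
  have "(2::int)^r dvd 2^t*x - 2^t*x'" using assms(2) by (metis mod_eq_dvd_iff)
  moreover have "Suc t \<le> r" using assms(1) by simp
  then have "(2::int)^(Suc t) dvd 2^r" by (rule le_imp_power_dvd)
  ultimately have "(2::int)^t * 2 dvd 2^t * (x - x')" by (simp add: algebra_simps dvd_trans)
  then have "2 dvd x - x'" by (subst (asm) dvd_mult_cancel_left) simp
  then show ?thesis by auto
qed

theorem proposition5p4:
  fixes r i :: nat and x y :: int
  assumes "r > 1"
    and "i \<le> 2 * r - 1"
    and "((2 ^ (i div 2) * x) mod 2 ^ r, (2 ^ (i div 2) * y) mod 2 ^ r) \<in> Pclass r i"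
  shows "((2 ^ (i div 2) * (x - y)) mod 2 ^ r, (2 ^ (i div 2) * (x + y)) mod 2 ^ r)
           \<in> Pclass r (i + 1)
         \<and> card (parents (2 ^ r)
              ((2 ^ (i div 2) * (x - y)) mod 2 ^ r, (2 ^ (i div 2) * (x + y)) mod 2 ^ r)) = 2"
proof
  define t where "t = i div 2"
  have tr: "t < r" using assms(1,2) unfolding t_def by linarith
  have ir: "i < 2*r" using assms(1,2) by linarith
  show "((2 ^ (i div 2) * (x - y)) mod 2 ^ r, (2 ^ (i div 2) * (x + y)) mod 2 ^ r)
           \<in> Pclass r (i + 1)"
  proof (cases "even i")
    case True
    then obtain x' y' where xy: "(2^t*x) mod 2^r = (2^t*x') mod 2^r" "(2^t*y) mod 2^r = (2^t*y') mod 2^r"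
      and o: "odd x' \<noteq> odd y'"
      using assms(3) ir unfolding Pclass_def t_def by auto
    have "odd x \<noteq> odd y" using o parity_transfer[OF tr xy(1)] parity_transfer[OF tr xy(2)] by simp
    then have oo: "odd (x-y) \<and> odd (x+y)" by auto
    have f: "i + 1 < 2*r" "(i+1) div 2 = t" "odd (i+1)" "i+1 \<noteq> 2*r" using True ir t_def by presburger+
    have P: "Pclass r (i+1) = {((2 ^ t * x) mod 2 ^ r, (2 ^ t * y) mod 2 ^ r) | x y :: int. odd x \<and> odd y}"
      unfolding Pclass_def using f by simp
    have "((2^t*(x-y)) mod 2^r, (2^t*(x+y)) mod 2^r) \<in> Pclass r (i+1)" unfolding P using oo by blast
    then show ?thesis unfolding t_def .
  next
    case False
    then obtain x' y' where xy: "(2^t*x) mod 2^r = (2^t*x') mod 2^r" "(2^t*y) mod 2^r = (2^t*y') mod 2^r"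
      and o: "odd x'" "odd y'"
      using assms(3) ir unfolding Pclass_def t_def by auto
    have oxy: "odd x" "odd y" using o parity_transfer[OF tr xy(1)] parity_transfer[OF tr xy(2)] by simp_all
    define a where "a = (x - y) div 2"
    define b where "b = (x + y) div 2"
    have a2: "x - y = 2 * a" using oxy a_def by auto
    have b2: "x + y = 2 * b" using oxy b_def by auto
    have ab: "odd a \<noteq> odd b"
    proof -
      have "a + b = x" using a2 b2 by simp
      then show ?thesis using oxy by auto
    qed
    have e1: "(2::int)^t * (x-y) = 2^(Suc t) * a" using a2 by simp
    have e2: "(2::int)^t * (x+y) = 2^(Suc t) * b" using b2 by simp
    have id: "(i+1) div 2 = Suc t" using False t_def by presburger
    show ?thesis
    proof (cases "i + 1 = 2*r")
      case True
      then have "Suc t = r" using id by simp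
      then show ?thesis using True e1 e2 unfolding Pclass_def t_def by simp
    next
      case F2: False
      then have f: "i + 1 < 2*r" "even (i+1)" "i+1 \<noteq> 2*r" using ir False by auto
      have P: "Pclass r (i+1) = {((2 ^ Suc t * x) mod 2 ^ r, (2 ^ Suc t * y) mod 2 ^ r) | x y :: int. odd x \<noteq> odd y}"
        unfolding Pclass_def using f id by simp
      have "((2^Suc t*a) mod 2^r, (2^Suc t*b) mod 2^r) \<in> Pclass r (i+1)" unfolding P using ab by blast
      then have "((2^t*(x-y)) mod 2^r, (2^t*(x+y)) mod 2^r) \<in> Pclass r (i+1)"
        by (simp only: e1 e2)
      then show ?thesis unfolding t_def .
    qed
  qed
  define h :: int where "h = 2^(r-1)"
  have n: "(2::int)^r = 2*h" using assms(1) unfolding h_def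
    by (metis Suc_diff_1 less_trans zero_less_one power_Suc)
  have h0: "h > 0" using h_def by simp
  have eq: "((2 ^ (i div 2) * (x - y)) mod 2 ^ r, (2 ^ (i div 2) * (x + y)) mod 2 ^ r)
     = submove (2^r) ((2 ^ (i div 2) * x) mod 2 ^ r, (2 ^ (i div 2) * y) mod 2 ^ r)"
    by (simp add: submove_def mod_diff_eq mod_add_eq right_diff_distrib distrib_left)
  show "card (parents (2 ^ r)
              ((2 ^ (i div 2) * (x - y)) mod 2 ^ r, (2 ^ (i div 2) * (x + y)) mod 2 ^ r)) = 2"
  proof -
    have "card (parents (2*h) (submove (2*h) ((2 ^ (i div 2) * x) mod (2*h), (2 ^ (i div 2) * y) mod (2*h)))) = 2"
      by (rule parents_two[OF h0]) (simp_all add: h0)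
    then show ?thesis using eq n by metis
  qed
qed

end
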